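(* Let $n$ be an even positive integer and $m \ge 2$ an integer, and let $G$ be the Random Integer Generation game with $n$ players and $m$ strategies (defined in the context). Let $\bar{\sigma}$ be the mixed strategy profile with $\bar{\sigma}_i = (1/m, 1/m, \dots, 1/m)$ for every player $i$, i.e. each player chooses a strategy in $\{0,1,\dots,m-1\}$ uniformly at random. Then $\bar{\sigma}$ is the only Nash equilibrium of $G$, and moreover $\bar{\sigma}$ is an alliance-resistant Nash equilibrium.
   Context: A one-shot game with $n$ players consists of finite pure-strategy sets $S_1,\dots,S_n$ and utility functions $u_i : S_1\times\cdots\times S_n \to \mathbb{R}$; players choose simultaneously and independently. A mixed strategy for player $i$ is a probability distribution $\sigma_i$ on $S_i$; a mixed strategy profile is $\sigma=(\sigma_1,\dots,\sigma_n)$, and $u_i(\sigma)$ denotes the expected utility when each $s_i$ is drawn independently from $\sigma_i$. A profile $\sigma$ is a Nash equilibrium if for every player $i$ and every mixed strategy $\tilde\sigma_i$ of player $i$, $u_i(\sigma) \ge u_i(\tilde\sigma_i, \sigma_{-i})$. A profile $\sigma$ is an alliance-resistant Nash equilibrium if for every non-empty set $P$ of players and every choice of mixed strategies $\tilde\sigma_P$ for the members of $P$, $u_P(\sigma) \ge u_P(\tilde\sigma_P, \sigma_{-P})$, where $u_P$ is the sum of the utilities of the members of $P$. The Random Integer Generation (RIG) game with $n$ players ($n$ even) and $m\ge 2$ strategies: each player $i\in\{1,\dots,n\}$ has pure strategy set $S_i=\{0,1,\dots,m-1\}$. Players are paired as $(2k-1, 2k)$ for $k=1,\dots,n/2$.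 At outcome $s=(s_1,\dots,s_n)$, player $2k-1$ receives $u_{2k-1}(s)=f(s_{2k-1},s_{2k})$ and player $2k$ receives $u_{2k}(s) = -f(s_{2k-1},s_{2k})$, where $f(a,b)=1$ if $a-b\equiv 0 \pmod m$, $f(a,b)=-1$ if $a-b\equiv -1 \pmod m$, and $f(a,b)=0$ otherwise. *)

theory Defs
  imports Main "HOL-Library.FuncSet" Complex_Main
begin

definition pure_profiles :: "nat \<Rightarrow> nat \<Rightarrow> (nat \<Rightarrow> nat) set" where
  "pure_profiles n m = PiE {1..n} (\<lambda>_. {..<m})"

definition mixed_strategy :: "nat \<Rightarrow> (nat \<Rightarrow> real) \<Rightarrow> bool" where
  "mixed_strategy m p \<longleftrightarrow> (\<forall>s<m. 0 \<le> p s) \<and> (\<Sum>s<m. p s) = 1"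

definition mixed_profile :: "nat \<Rightarrow> nat \<Rightarrow> (nat \<Rightarrow> nat \<Rightarrow> real) \<Rightarrow> bool" where
  "mixed_profile n m \<sigma> \<longleftrightarrow> (\<forall>i\<in>{1..n}. mixed_strategy m (\<sigma> i))"

definition exp_utility ::
  "nat \<Rightarrow> nat \<Rightarrow> (nat \<Rightarrow> (nat \<Rightarrow> nat) \<Rightarrow> real) \<Rightarrow> (nat \<Rightarrow> nat \<Rightarrow> real) \<Rightarrow> nat \<Rightarrow> real" where
  "exp_utility n m u \<sigma> i = (\<Sum>s\<in>pure_profiles n m. (\<Prod>j\<in>{1..n}. \<sigma> j (s j)) * u i s)"

definition nash_equilibrium ::
  "nat \<Rightarrow> nat \<Rightarrow> (nat \<Rightarrow> (nat \<Rightarrow> nat) \<Rightarrow> real) \<Rightarrow> (nat \<Rightarrow> nat \<Rightarrow> real) \<Rightarrow> bool" where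
  "nash_equilibrium n m u \<sigma> \<longleftrightarrow> mixed_profile n m \<sigma> \<and>
     (\<forall>i\<in>{1..n}. \<forall>\<tau>. mixed_strategy m \<tau> \<longrightarrow>
        exp_utility n m u (\<sigma>(i := \<tau>)) i \<le> exp_utility n m u \<sigma> i)"

definition alliance_resistant_ne ::
  "nat \<Rightarrow> nat \<Rightarrow> (nat \<Rightarrow> (nat \<Rightarrow> nat) \<Rightarrow> real) \<Rightarrow> (nat \<Rightarrow> nat \<Rightarrow> real) \<Rightarrow> bool" where
  "alliance_resistant_ne n m u \<sigma> \<longleftrightarrow> mixed_profile n m \<sigma> \<and>
     (\<forall>P. P \<subseteq> {1..n} \<longrightarrow> P \<noteq> {} \<longrightarrow> (\<forall>\<tau>. (\<forall>i\<in>P. mixed_strategy m (\<tau> i)) \<longrightarrow>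
        (\<Sum>i\<in>P. exp_utility n m u (\<lambda>j. if j \<in> P then \<tau> j else \<sigma> j) i)
          \<le> (\<Sum>i\<in>P. exp_utility n m u \<sigma> i)))"

definition rig_f :: "nat \<Rightarrow> nat \<Rightarrow> nat \<Rightarrow> real" where
  "rig_f m a b = (if (int a - int b) mod int m = 0 then 1
                  else if (int a - int b) mod int m = (-1) mod int m then -1 else 0)"

definition rig_utility :: "nat \<Rightarrow> nat \<Rightarrow> (nat \<Rightarrow> nat) \<Rightarrow> real" where
  "rig_utility m i s = (if odd i then rig_f m (s i) (s (i + 1))
                        else - rig_f m (s (i - 1)) (s i))"

end

theory Submission
  imports Defs
begin

lemma pair_exp:
  fixes \<sigma> :: "nat \<Rightarrow> nat \<Rightarrow> real"
  assumes S: "\<And>j. j \<in> {1..n} \<Longrightarrow> (\<Sum>t<m. \<sigma> j t) = 1"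
    and i: "i \<in> {1..n}" and k: "k \<in> {1..n}" and ik: "i \<noteq> k"
  shows "(\<Sum>s\<in>pure_profiles n m. (\<Prod>j\<in>{1..n}. \<sigma> j (s j)) * g (s i) (s k))
       = (\<Sum>a<m. \<Sum>b<m. \<sigma> i a * \<sigma> k b * g a b)"
proof -
  define F where "F a b j t = (if j = i then (if t = a then \<sigma> j t else 0)
      else if j = k then (if t = b then \<sigma> j t else 0) else \<sigma> j t)" for a b j t
  have PF: "(\<Prod>j\<in>{1..n}. F a b j (s j)) = (if s i = a \<and> s k = b then (\<Prod>j\<in>{1..n}. \<sigma> j (s j)) else 0)"
    for a b s
  proof (cases "s i = a \<and> s k = b")
    case True
    then show ?thesis by (auto simp: F_def intro!: prod.cong)
  next
    case False
    then have "\<exists>j\<in>{1..n}. F a b j (s j) = 0" using i k ik unfolding F_def by auto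
    then have "(\<Prod>j\<in>{1..n}. F a b j (s j)) = 0" by (rule prod_zero[OF finite_atLeastAtMost])
    then show ?thesis using False by (simp only: if_False)
  qed
  have 1: "(\<Prod>j\<in>{1..n}. \<sigma> j (s j)) * g (s i) (s k)
      = (\<Sum>a<m. \<Sum>b<m. g a b * (\<Prod>j\<in>{1..n}. F a b j (s j)))"
    if s: "s \<in> pure_profiles n m" for s
  proof -
    have si: "s i < m" "s k < m" using s i k unfolding pure_profiles_def by (auto simp: PiE_iff)
    have "(\<Sum>a<m. \<Sum>b<m. g a b * (\<Prod>j\<in>{1..n}. F a b j (s j)))
       = (\<Sum>a<m. \<Sum>b<m. if a = s i then (if b = s k then g a b * (\<Prod>j\<in>{1..n}. \<sigma> j (s j)) else 0) else 0)"
    proof -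
      have E: "g a b * (\<Prod>j\<in>{1..n}. F a b j (s j)) = (if a = s i then (if b = s k then g a b * (\<Prod>j\<in>{1..n}. \<sigma> j (s j)) else 0) else 0)" for a b
        by (subst PF) simp
      show ?thesis by (simp only: E)
    qed
    also have "\<dots> = (\<Sum>a<m. if a = s i then (\<Sum>b<m. if b = s k then g a b * (\<Prod>j\<in>{1..n}. \<sigma> j (s j)) else 0) else 0)"
      by (intro sum.cong refl) auto
    also have "\<dots> = g (s i) (s k) * (\<Prod>j\<in>{1..n}. \<sigma> j (s j))"
      using si by (simp add: sum.delta')
    finally show ?thesis by simp
  qed
  have 2: "(\<Sum>s\<in>pure_profiles n m. \<Prod>j\<in>{1..n}. F a b j (s j)) = \<sigma> i a * \<sigma> k b"
    if ab: "a < m" "b < m" for a b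
  proof -
    have "(\<Sum>s\<in>pure_profiles n m. \<Prod>j\<in>{1..n}. F a b j (s j)) = (\<Prod>j\<in>{1..n}. \<Sum>t<m. F a b j t)"
      unfolding pure_profiles_def by (rule prod_sum_PiE[symmetric]) auto
    also have "\<dots> = (\<Sum>t<m. F a b i t) * (\<Prod>j\<in>{1..n}-{i}. \<Sum>t<m. F a b j t)"
      using i by (simp add: prod.remove)
    also have "(\<Prod>j\<in>{1..n}-{i}. \<Sum>t<m. F a b j t) = (\<Sum>t<m. F a b k t) * (\<Prod>j\<in>{1..n}-{i}-{k}. \<Sum>t<m. F a b j t)"
      using k ik by (intro prod.remove) auto
    also have "(\<Prod>j\<in>{1..n}-{i}-{k}. \<Sum>t<m. F a b j t) = 1"
      by (rule prod.neutral) (auto simp: F_def S)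
    also have "(\<Sum>t<m. F a b i t) = \<sigma> i a" using ab by (simp add: F_def sum.delta')
    also have "(\<Sum>t<m. F a b k t) = \<sigma> k b" using ab ik by (simp add: F_def sum.delta')
    finally show ?thesis by simp
  qed
  have "(\<Sum>s\<in>pure_profiles n m. (\<Prod>j\<in>{1..n}. \<sigma> j (s j)) * g (s i) (s k))
      = (\<Sum>s\<in>pure_profiles n m. \<Sum>a<m. \<Sum>b<m. g a b * (\<Prod>j\<in>{1..n}. F a b j (s j)))"
    by (rule sum.cong[OF refl], rule 1)
  also have "\<dots> = (\<Sum>a<m. \<Sum>b<m. g a b * (\<Sum>s\<in>pure_profiles n m. \<Prod>j\<in>{1..n}. F a b j (s j)))"
    by (simp add: sum.swap[of _ "pure_profiles n m"] sum_distrib_left)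
  also have "\<dots> = (\<Sum>a<m. \<Sum>b<m. \<sigma> i a * \<sigma> k b * g a b)"
    by (intro sum.cong refl) (simp add: 2[simplified])
  finally show ?thesis .
qed

definition nxt :: "nat \<Rightarrow> nat \<Rightarrow> nat" where "nxt m a = Suc a mod m"
definition prv :: "nat \<Rightarrow> nat \<Rightarrow> nat" where "prv m b = (if b = 0 then m - 1 else b - 1)"

lemma nxt_alt: "a < m \<Longrightarrow> nxt m a = (if Suc a < m then Suc a else 0)"
  unfolding nxt_def by (cases "Suc a = m") auto

lemma nxt_lt: "a < m \<Longrightarrow> nxt m a < m"
  by (simp add: nxt_alt)

lemma prv_lt: "b < m \<Longrightarrow> prv m b < m"
  unfolding prv_def by auto

lemma nxt_prv_iff: "a < m \<Longrightarrow> b < m \<Longrightarrow> (b = nxt m a) = (a = prv m b)"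
  unfolding prv_def by (auto simp: nxt_alt)

lemma prv_nxt: "a < m \<Longrightarrow> prv m (nxt m a) = a"
  unfolding prv_def by (auto simp: nxt_alt)

lemma nxt_prv: "b < m \<Longrightarrow> nxt m (prv m b) = b"
  unfolding prv_def by (auto simp: nxt_alt)

lemma int_mod_small:
  assumes "- int m < d" "d < int m"
  shows "d mod int m = (if 0 \<le> d then d else d + int m)"
proof (cases "0 \<le> d")
  case True
  then show ?thesis using \<open>d < int m\<close> by simp
next
  case False
  have "d mod int m = (d + int m) mod int m" by simp
  also have "\<dots> = d + int m" using False \<open>- int m < d\<close> by (intro mod_pos_pos_trivial) auto
  finally show ?thesis using False by simp
qed

lemma rig_f_char:
  assumes m: "2 \<le> m" and a: "a < m" and b: "b < m"
  shows "rig_f m a b = (if a = b then 1 else if b = nxt m a then -1 else 0)"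
proof -
  have 1: "(int a - int b) mod int m = (if int b \<le> int a then int a - int b else int a - int b + int m)"
    using a b by (subst int_mod_small) auto
  have 2: "(-1::int) mod int m = int m - 1"
    using int_mod_small[of m "-1"] m by simp
  show ?thesis unfolding rig_f_def 1 2 using a b m by (auto simp: nxt_alt)
qed

lemma row_sum:
  assumes m: "2 \<le> m" and a: "a < m"
  shows "(\<Sum>b<m. y b * rig_f m a b) = y a - y (nxt m a)"
proof -
  have ne: "a \<noteq> nxt m a" using a m by (auto simp: nxt_alt)
  have "(\<Sum>b<m. y b * rig_f m a b) = (\<Sum>b<m. (if b = a then y a else 0) - (if b = nxt m a then y (nxt m a) else 0))"
    by (intro sum.cong refl) (use ne m a in \<open>auto simp: rig_f_char\<close>)
  also have "\<dots> = y a - y (nxt m a)"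
    using a nxt_lt[OF a] by (simp add: sum_subtractf sum.delta)
  finally show ?thesis .
qed

lemma col_sum:
  assumes m: "2 \<le> m" and b: "b < m"
  shows "(\<Sum>a<m. x a * rig_f m a b) = x b - x (prv m b)"
proof -
  have ne: "b \<noteq> prv m b" using b m by (auto simp: prv_def)
  have "(\<Sum>a<m. x a * rig_f m a b) = (\<Sum>a<m. (if a = b then x b else 0) - (if a = prv m b then x (prv m b) else 0))"
    by (intro sum.cong refl) (use ne m b in \<open>auto simp: rig_f_char nxt_prv_iff\<close>)
  also have "\<dots> = x b - x (prv m b)"
    using b prv_lt[OF b] by (simp add: sum_subtractf sum.delta)
  finally show ?thesis .
qed

definition BB :: "nat \<Rightarrow> (nat \<Rightarrow> real) \<Rightarrow> (nat \<Rightarrow> real) \<Rightarrow> real" where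
  "BB m x y = (\<Sum>a<m. \<Sum>b<m. x a * y b * rig_f m a b)"

lemma BB_row: "2 \<le> m \<Longrightarrow> BB m x y = (\<Sum>a<m. x a * (y a - y (nxt m a)))"
  unfolding BB_def
  by (intro sum.cong refl) (simp add: row_sum[symmetric] sum_distrib_left mult_ac)

lemma BB_col: "2 \<le> m \<Longrightarrow> BB m x y = (\<Sum>b<m. y b * (x b - x (prv m b)))"
  unfolding BB_def
  by (subst sum.swap) (intro sum.cong refl, simp add: col_sum[symmetric] sum_distrib_left mult_ac)

lemma BB_unif2: "2 \<le> m \<Longrightarrow> BB m x (\<lambda>_. c) = 0"
  by (simp add: BB_row)

lemma BB_unif1: "2 \<le> m \<Longrightarrow> BB m (\<lambda>_. c) y = 0"
  by (simp add: BB_col)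

lemma util_odd:
  fixes \<sigma> :: "nat \<Rightarrow> nat \<Rightarrow> real"
  assumes S: "\<And>j. j \<in> {1..n} \<Longrightarrow> (\<Sum>t<m. \<sigma> j t) = 1"
    and n: "even n" and i: "i \<in> {1..n}" "odd i"
  shows "exp_utility n m (rig_utility m) \<sigma> i = BB m (\<sigma> i) (\<sigma> (i+1))"
proof -
  have i1: "i + 1 \<in> {1..n}" using i n by simp presburger
  have ne: "i \<noteq> i + 1" by simp
  have "exp_utility n m (rig_utility m) \<sigma> i
     = (\<Sum>s\<in>pure_profiles n m. (\<Prod>j\<in>{1..n}. \<sigma> j (s j)) * rig_f m (s i) (s (i+1)))"
    unfolding exp_utility_def rig_utility_def using i by (intro sum.cong refl) simp
  also have "\<dots> = BB m (\<sigma> i) (\<sigma> (i+1))"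
    unfolding BB_def by (rule pair_exp[OF S i(1) i1 ne])
  finally show ?thesis .
qed

lemma util_even:
  fixes \<sigma> :: "nat \<Rightarrow> nat \<Rightarrow> real"
  assumes S: "\<And>j. j \<in> {1..n} \<Longrightarrow> (\<Sum>t<m. \<sigma> j t) = 1"
    and i: "i \<in> {1..n}" "even i"
  shows "exp_utility n m (rig_utility m) \<sigma> i = - BB m (\<sigma> (i-1)) (\<sigma> i)"
proof -
  have i1: "i - 1 \<in> {1..n}" "i - 1 \<noteq> i" using i by (auto elim!: evenE)
  have "exp_utility n m (rig_utility m) \<sigma> i
     = - (\<Sum>s\<in>pure_profiles n m. (\<Prod>j\<in>{1..n}. \<sigma> j (s j)) * rig_f m (s (i-1)) (s i))"
    unfolding exp_utility_def rig_utility_def using i by (simp add: sum_negf)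
  also have "(\<Sum>s\<in>pure_profiles n m. (\<Prod>j\<in>{1..n}. \<sigma> j (s j)) * rig_f m (s (i-1)) (s i)) = BB m (\<sigma> (i-1)) (\<sigma> i)"
    unfolding BB_def by (rule pair_exp[OF S i1(1) i(1) i1(2)])
  finally show ?thesis .
qed

definition ptn :: "nat \<Rightarrow> nat" where "ptn i = (if odd i then i + 1 else i - 1)"

lemma ptn_in: "even n \<Longrightarrow> i \<in> {1..n} \<Longrightarrow> ptn i \<in> {1..n}"
  unfolding ptn_def by simp presburger

lemma ptn_ptn: "i \<in> {1..n} \<Longrightarrow> ptn (ptn i) = i"
  unfolding ptn_def by (auto elim!: evenE oddE)

lemma util_ptn:
  assumes i: "i \<in> {1..n}"
  shows "exp_utility n m (rig_utility m) \<sigma> (ptn i) = - exp_utility n m (rig_utility m) \<sigma> i"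
proof -
  have "rig_utility m (ptn i) s = - rig_utility m i s" for s
    using i unfolding ptn_def rig_utility_def by (auto elim!: evenE oddE)
  then show ?thesis unfolding exp_utility_def by (simp add: sum_negf)
qed

lemma chain:
  assumes m: "1 \<le> m" and h: "\<forall>a<m. z a \<le> (z (nxt m a) :: real)"
  shows "\<forall>a<m. z a = z 0"
proof -
  have le: "a \<le> b \<Longrightarrow> b < m \<Longrightarrow> z a \<le> z b" for a b
  proof (induction b)
    case 0 then show ?case by simp
  next
    case (Suc b)
    show ?case
    proof (cases "a = Suc b")
      case False
      then have "z a \<le> z b" using Suc by simp
      also have "z b \<le> z (nxt m b)" using h Suc.prems by simp
      also have "nxt m b = Suc b" using Suc.prems by (simp add: nxt_alt)
      finally show ?thesis .
    qed simp
  qed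
  show ?thesis
  proof (intro allI impI)
    fix a assume a: "a < m"
    have "z 0 \<le> z a" using le a by simp
    moreover have "z a \<le> z (m - 1)" using le a by simp
    moreover have "z (m - 1) \<le> z (nxt m (m - 1))" using h m by simp
    moreover have "nxt m (m - 1) = 0" using m by (simp add: nxt_alt)
    ultimately show "z a = z 0" by simp
  qed
qed

lemma shift_sum:
  assumes m: "1 \<le> m"
  shows "(\<Sum>a<m. z (nxt m a)) = (\<Sum>a<m. (z a :: real))"
proof -
  have "bij_betw (nxt m) {..<m} {..<m}"
    by (rule bij_betw_byWitness[where f'="prv m"])
       (auto simp: nxt_lt prv_lt nxt_prv prv_nxt)
  then show ?thesis by (rule sum.reindex_bij_betw)
qed

lemma const_unif:
  assumes m: "1 \<le> m" and z: "mixed_strategy m z" and h: "\<forall>a<m. z a \<le> z (nxt m a)"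
  shows "\<forall>s<m. z s = 1 / real m"
proof -
  have c: "\<forall>a<m. z a = z 0" by (rule chain[OF m h])
  have "1 = (\<Sum>a<m. z a)" using z unfolding mixed_strategy_def by simp
  also have "\<dots> = (\<Sum>a<m. z 0)"
  proof (rule sum.cong[OF refl])
    fix a assume "a \<in> {..<m}"
    then show "z a = z 0" using c by blast
  qed
  also have "\<dots> = real m * z 0" by simp
  finally have z0: "z 0 = 1 / real m" using m by (simp add: field_simps)
  show ?thesis
  proof (intro allI impI)
    fix s assume "s < m"
    then have "z s = z 0" using c by blast
    then show "z s = 1 / real m" using z0 by simp
  qed
qed

lemma util_zero:
  fixes \<sigma> :: "nat \<Rightarrow> nat \<Rightarrow> real"
  assumes S: "\<And>j. j \<in> {1..n} \<Longrightarrow> (\<Sum>t<m. \<sigma> j t) = 1"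
    and n: "even n" and m: "2 \<le> m" and i: "i \<in> {1..n}" and c: "\<sigma> (ptn i) = (\<lambda>_. c)"
  shows "exp_utility n m (rig_utility m) \<sigma> i = 0"
proof (cases "odd i")
  case True
  then show ?thesis using c util_odd[OF S n i True] BB_unif2[OF m] by (simp add: ptn_def)
next
  case False
  then show ?thesis using c util_even[OF S i] BB_unif1[OF m] by (simp add: ptn_def)
qed

lemma ifmult: "(if P then 1 else 0) * (x::real) = (if P then x else 0)"
  by simp

lemma unif_mixed: "1 \<le> m \<Longrightarrow> mixed_strategy m (\<lambda>s. 1 / real m)"
  unfolding mixed_strategy_def by simp

lemma delta_mixed: "a < m \<Longrightarrow> mixed_strategy m (\<lambda>t. if t = a then 1 else 0)"
  unfolding mixed_strategy_def by simp

theorem mainTheorem1: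
  fixes n m :: nat
  assumes "even n" and "0 < n" and "2 \<le> m"
  shows "nash_equilibrium n m (rig_utility m) (\<lambda>i s. 1 / real m)
       \<and> (\<forall>\<sigma>. nash_equilibrium n m (rig_utility m) \<sigma> \<longrightarrow>
             (\<forall>i\<in>{1..n}. \<forall>s<m. \<sigma> i s = 1 / real m))
       \<and> alliance_resistant_ne n m (rig_utility m) (\<lambda>i s. 1 / real m)"
proof -
  note n = assms(1) and m = assms(3)
  have m1: "1 \<le> m" using m by simp
  define U where "U = (\<lambda>(i::nat) (s::nat). 1 / real m)"
  have US: "(\<Sum>t<m. U j t) = 1" for j using m1 unfolding U_def by simp
  have mU: "mixed_profile n m U" unfolding mixed_profile_def U_def using unif_mixed[OF m1] by simp
  have U0: "exp_utility n m (rig_utility m) U i = 0" if "i \<in> {1..n}" for i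
    by (rule util_zero[OF US n m that]) (simp add: U_def)
  have P1: "nash_equilibrium n m (rig_utility m) U"
    unfolding nash_equilibrium_def
  proof (intro conjI mU ballI allI impI)
    fix i \<tau> assume i: "i \<in> {1..n}" and \<tau>: "mixed_strategy m \<tau>"
    have S: "(\<Sum>t<m. (U(i:=\<tau>)) j t) = 1" for j
      using \<tau> US unfolding mixed_strategy_def by simp
    have "ptn i \<noteq> i" using i unfolding ptn_def by auto
    then have "exp_utility n m (rig_utility m) (U(i:=\<tau>)) i = 0"
      by (intro util_zero[OF S n m i, where c="1 / real m"]) (simp add: U_def)
    then show "exp_utility n m (rig_utility m) (U(i:=\<tau>)) i \<le> exp_utility n m (rig_utility m) U i"
      using U0[OF i] by simp
  qed
  have P3: "alliance_resistant_ne n m (rig_utility m) U"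
    unfolding alliance_resistant_ne_def
  proof (intro conjI mU allI impI)
    fix P :: "nat set" and \<tau> assume P: "P \<subseteq> {1..n}" "P \<noteq> {}" and \<tau>: "\<forall>i\<in>P. mixed_strategy m (\<tau> i)"
    define \<rho> where "\<rho> = (\<lambda>j. if j \<in> P then \<tau> j else U j)"
    have S: "(\<Sum>t<m. \<rho> j t) = 1" for j
      using \<tau> US unfolding mixed_strategy_def \<rho>_def by simp
    define Q where "Q = {i\<in>P. ptn i \<in> P}"
    have finP: "finite P" using P finite_subset by blast
    let ?u = "\<lambda>i. exp_utility n m (rig_utility m) \<rho> i"
    have "(\<Sum>i\<in>P. ?u i) = (\<Sum>i\<in>Q. ?u i)"
    proof (rule sum.mono_neutral_right[OF finP])
      show "Q \<subseteq> P" unfolding Q_def by auto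
      show "\<forall>i\<in>P - Q. ?u i = 0"
      proof
        fix i assume i: "i \<in> P - Q"
        then have "\<rho> (ptn i) = (\<lambda>_. 1 / real m)" unfolding Q_def \<rho>_def U_def by auto
        then show "?u i = 0" using i P by (intro util_zero[OF S n m]) auto
      qed
    qed
    also have "(\<Sum>i\<in>Q. ?u i) = 0"
    proof -
      have QS: "Q \<subseteq> {1..n}" using P unfolding Q_def by auto
      have "bij_betw ptn Q Q"
        by (rule bij_betw_byWitness[where f'=ptn]) (use P in \<open>auto simp: Q_def ptn_ptn subset_iff\<close>)
      then have "(\<Sum>i\<in>Q. ?u (ptn i)) = (\<Sum>i\<in>Q. ?u i)" by (rule sum.reindex_bij_betw)
      moreover have "(\<Sum>i\<in>Q. ?u (ptn i)) = - (\<Sum>i\<in>Q. ?u i)"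
        using QS by (simp add: util_ptn sum_negf subset_iff)
      ultimately show ?thesis by simp
    qed
    also have "0 = (\<Sum>i\<in>P. exp_utility n m (rig_utility m) U i)"
      using U0 P by (simp add: subset_iff)
    finally show "(\<Sum>i\<in>P. exp_utility n m (rig_utility m) (\<lambda>j. if j \<in> P then \<tau> j else U j) i)
        \<le> (\<Sum>i\<in>P. exp_utility n m (rig_utility m) U i)" unfolding \<rho>_def by simp
  qed
  have P2: "\<forall>i\<in>{1..n}. \<forall>s<m. \<sigma> i s = 1 / real m"
    if ne: "nash_equilibrium n m (rig_utility m) \<sigma>" for \<sigma>
  proof (intro ballI allI impI)
    fix i s assume i: "i \<in> {1..n}" and s: "s < m"
    have mp: "mixed_profile n m \<sigma>" and br: "\<And>j \<tau>. j \<in> {1..n} \<Longrightarrow> mixed_strategy m \<tau> \<Longrightarrow>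
        exp_utility n m (rig_utility m) (\<sigma>(j := \<tau>)) j \<le> exp_utility n m (rig_utility m) \<sigma> j"
      using ne unfolding nash_equilibrium_def by auto
    have S: "\<And>j. j \<in> {1..n} \<Longrightarrow> (\<Sum>t<m. \<sigma> j t) = 1"
      using mp unfolding mixed_profile_def mixed_strategy_def by auto
    have Sd: "\<And>j. j \<in> {1..n} \<Longrightarrow> (\<Sum>t<m. (\<sigma>(k := \<tau>)) j t) = 1" if "mixed_strategy m \<tau>" for k \<tau>
      using S that unfolding mixed_strategy_def by simp
    define q where "q = (if odd i then i else i - 1)"
    have ip: "1 \<le> i" "i \<le> n" using i by auto
    have q1: "1 \<le> q \<and> odd q \<and> q + 1 \<le> n"
    proof (cases "odd i")
      case True
      then show ?thesis using ip n unfolding q_def by simp presburger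
    next
      case False
      then show ?thesis using ip n unfolding q_def by simp presburger
    qed
    have q: "q \<in> {1..n}" "odd q" "q + 1 \<in> {1..n}" "even (q+1)" "q + 1 - 1 = q"
      using q1 by auto
    have ii: "i = q \<or> i = q + 1" unfolding q_def using i by auto
    define x where "x = \<sigma> q"
    define y where "y = \<sigma> (q+1)"
    define v where "v = BB m x y"
    define \<delta> where "\<delta> a = (\<lambda>t. if t = a then 1 else (0::real))" for a :: nat
    have uo: "exp_utility n m (rig_utility m) \<sigma> q = v"
      using util_odd[OF S n q(1,2)] unfolding v_def x_def y_def by simp
    have ue: "exp_utility n m (rig_utility m) \<sigma> (q+1) = - v"
      using util_even[OF S q(3,4)] q(5) unfolding v_def x_def y_def by simp
    have dm: "mixed_strategy m (\<delta> a)" if "a < m" for a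
      unfolding \<delta>_def by (rule delta_mixed[OF that])
    have r1: "y a - y (nxt m a) \<le> v" if a: "a < m" for a
    proof -
      have S1: "\<And>j. j \<in> {1..n} \<Longrightarrow> (\<Sum>t<m. (\<sigma>(q := \<delta> a)) j t) = 1"
        by (rule Sd[OF dm[OF a]])
      have "exp_utility n m (rig_utility m) (\<sigma>(q := \<delta> a)) q
          = BB m ((\<sigma>(q := \<delta> a)) q) ((\<sigma>(q := \<delta> a)) (q+1))"
        by (rule util_odd[OF S1 n q(1,2)])
      also have "\<dots> = BB m (\<delta> a) y" unfolding y_def by simp
      also have "\<dots> = y a - y (nxt m a)" using a by (simp add: BB_row[OF m] \<delta>_def ifmult)
      finally show ?thesis using br[OF q(1) dm[OF a]] uo by simp
    qed
    have r2: "v \<le> x (nxt m a) - x a" if a: "a < m" for a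
    proof -
      have b: "nxt m a < m" using nxt_lt[OF a] .
      have pa: "prv m (nxt m a) = a" using prv_nxt[OF a] .
      have S1: "\<And>j. j \<in> {1..n} \<Longrightarrow> (\<Sum>t<m. (\<sigma>(q+1 := \<delta> (nxt m a))) j t) = 1"
        by (rule Sd[OF dm[OF b]])
      have "exp_utility n m (rig_utility m) (\<sigma>(q+1 := \<delta> (nxt m a))) (q+1)
          = - BB m ((\<sigma>(q+1 := \<delta> (nxt m a))) (q + 1 - 1)) ((\<sigma>(q+1 := \<delta> (nxt m a))) (q+1))"
        by (rule util_even[OF S1 q(3,4)])
      also have "\<dots> = - BB m x (\<delta> (nxt m a))" unfolding x_def using q(5) by simp
      also have "BB m x (\<delta> (nxt m a)) = x (nxt m a) - x a" using b pa by (simp add: BB_col[OF m] \<delta>_def ifmult)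
      finally have E: "exp_utility n m (rig_utility m) (\<sigma>(q+1 := \<delta> (nxt m a))) (q+1) = - (x (nxt m a) - x a)" .
      show ?thesis using E br[OF q(3) dm[OF b]] ue by linarith
    qed
    have "(\<Sum>a<m. y a - y (nxt m a)) \<le> (\<Sum>a<m. v)" by (rule sum_mono) (simp add: r1)
    then have v1: "0 \<le> v" using shift_sum[OF m1, of y] m1 by (simp add: sum_subtractf zero_le_mult_iff)
    have "(\<Sum>a<m. v) \<le> (\<Sum>a<m. x (nxt m a) - x a)" by (rule sum_mono) (simp add: r2)
    then have v2: "v \<le> 0" using shift_sum[OF m1, of x] m1 by (simp add: sum_subtractf mult_le_0_iff)
    have mx: "mixed_strategy m x" and my: "mixed_strategy m y"
      using mp q unfolding mixed_profile_def x_def y_def by auto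
    have v0: "v = 0" using v1 v2 by simp
    have hx: "\<forall>a<m. x a \<le> x (nxt m a)"
    proof (intro allI impI)
      fix a assume "a < m"
      from r2[OF this] v0 show "x a \<le> x (nxt m a)" by simp
    qed
    have hy: "\<forall>a<m. y a \<le> y (nxt m a)"
    proof (intro allI impI)
      fix a assume "a < m"
      from r1[OF this] v0 show "y a \<le> y (nxt m a)" by simp
    qed
    have cx: "\<forall>s<m. x s = 1 / real m" by (rule const_unif[OF m1 mx hx])
    have cy: "\<forall>s<m. y s = 1 / real m" by (rule const_unif[OF m1 my hy])
    show "\<sigma> i s = 1 / real m" using ii cx cy s unfolding x_def y_def by auto
  qed
  show ?thesis using P1 P2 P3 unfolding U_def by blast
qed

end
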